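(* Let $C$ be a weak 2-group, let $x\in C$, and let $\bar x\in C$ be an object equipped with isomorphisms $i_x\colon 1\to x\otimes\bar x$ and $e_x\colon\bar x\otimes x\to 1$. Consider the two morphisms $A,B\colon 1\to x\otimes\bar x$ defined as composites $$A\colon\ 1\xrightarrow{i_x}x\otimes\bar x\xrightarrow{\cong}x\otimes(1\otimes\bar x)\xrightarrow{1_x\otimes(e_x^{-1}\otimes 1_{\bar x})}x\otimes((\bar x\otimes x)\otimes\bar x)\xrightarrow{\cong}(x\otimes\bar x)\otimes(x\otimes\bar x)\xrightarrow{i_x^{-1}\otimes 1_{x\otimes\bar x}}1\otimes(x\otimes\bar x)\xrightarrow{\cong}x\otimes\bar x,$$ $$B\colon\ 1\xrightarrow{i_x}x\otimes\bar x\xrightarrow{\cong}(x\otimes 1)\otimes\bar x\xrightarrow{(1_x\otimes e_x^{-1})\otimes 1_{\bar x}}(x\otimes(\bar x\otimes x))\otimes\bar x\xrightarrow{\cong}(x\otimes\bar x)\otimes(x\otimes\bar x)\xrightarrow{1_{x\otimes\bar x}\otimes i_x^{-1}}(x\otimes\bar x)\otimes 1\xrightarrow{\cong}x\otimes\bar x,$$ where each unlabeled arrow $\cong$ is the canonical isomorphism built from associators and left/right unitors (unique by Mac Lane's coherence theorem). Then $A=B$.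
   Context: A weak 2-group is a weak monoidal category (with associator, left and right unitors, unit object $1$) in which every morphism is invertible and every object $x$ admits an object $y$ with $x\otimes y\cong 1\cong y\otimes x$. *)

theory Defs
  imports Main
begin

text \<open>A (weak) monoidal category whose objects are all elements of type 'o and whose
morphisms are all elements of type 'm.  Comp g f is "g after f", defined (meaningfully)
when Cod f = Dom g.\<close>

record ('o, 'm) moncat =
  Dom :: "'m \<Rightarrow> 'o"
  Cod :: "'m \<Rightarrow> 'o"
  Id :: "'o \<Rightarrow> 'm"
  Comp :: "'m \<Rightarrow> 'm \<Rightarrow> 'm"
  Tens :: "'o \<Rightarrow> 'o \<Rightarrow> 'o"
  TensM :: "'m \<Rightarrow> 'm \<Rightarrow> 'm"
  Unit :: 'o
  Assoc :: "'o \<Rightarrow> 'o \<Rightarrow> 'o \<Rightarrow> 'm"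
  Lunit :: "'o \<Rightarrow> 'm"
  Runit :: "'o \<Rightarrow> 'm"

definition hom :: "('o, 'm, 'z) moncat_scheme \<Rightarrow> 'o \<Rightarrow> 'o \<Rightarrow> 'm set" where
  "hom C a b = {f. Dom C f = a \<and> Cod C f = b}"

definition is_inverse :: "('o, 'm, 'z) moncat_scheme \<Rightarrow> 'm \<Rightarrow> 'm \<Rightarrow> bool" where
  "is_inverse C f g \<longleftrightarrow> Dom C g = Cod C f \<and> Cod C g = Dom C f \<and>
     Comp C g f = Id C (Dom C f) \<and> Comp C f g = Id C (Cod C f)"

definition iso :: "('o, 'm, 'z) moncat_scheme \<Rightarrow> 'm \<Rightarrow> bool" where
  "iso C f \<longleftrightarrow> (\<exists>g. is_inverse C f g)"

definition Inv :: "('o, 'm, 'z) moncat_scheme \<Rightarrow> 'm \<Rightarrow> 'm" where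
  "Inv C f = (SOME g. is_inverse C f g)"

definition isomorphic :: "('o, 'm, 'z) moncat_scheme \<Rightarrow> 'o \<Rightarrow> 'o \<Rightarrow> bool" where
  "isomorphic C a b \<longleftrightarrow> (\<exists>f. f \<in> hom C a b \<and> iso C f)"

definition category :: "('o, 'm, 'z) moncat_scheme \<Rightarrow> bool" where
  "category C \<longleftrightarrow>
     (\<forall>a. Dom C (Id C a) = a \<and> Cod C (Id C a) = a) \<and>
     (\<forall>f g. Cod C f = Dom C g \<longrightarrow>
        Dom C (Comp C g f) = Dom C f \<and> Cod C (Comp C g f) = Cod C g) \<and>
     (\<forall>f. Comp C f (Id C (Dom C f)) = f \<and> Comp C (Id C (Cod C f)) f = f) \<and>
     (\<forall>f g h. Cod C f = Dom C g \<longrightarrow> Cod C g = Dom C h \<longrightarrow>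
        Comp C h (Comp C g f) = Comp C (Comp C h g) f)"

definition tensor_functor :: "('o, 'm, 'z) moncat_scheme \<Rightarrow> bool" where
  "tensor_functor C \<longleftrightarrow>
     (\<forall>f g. Dom C (TensM C f g) = Tens C (Dom C f) (Dom C g) \<and>
            Cod C (TensM C f g) = Tens C (Cod C f) (Cod C g)) \<and>
     (\<forall>a b. TensM C (Id C a) (Id C b) = Id C (Tens C a b)) \<and>
     (\<forall>f f' g g'. Cod C f = Dom C f' \<longrightarrow> Cod C g = Dom C g' \<longrightarrow>
        TensM C (Comp C f' f) (Comp C g' g) = Comp C (TensM C f' g') (TensM C f g))"

definition monoidal_category :: "('o, 'm, 'z) moncat_scheme \<Rightarrow> bool" where
  "monoidal_category C \<longleftrightarrow> category C \<and> tensor_functor C \<and>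
     \<comment> \<open>associator \<open>(a\<otimes>b)\<otimes>c \<rightarrow> a\<otimes>(b\<otimes>c)\<close>: natural isomorphism\<close>
     (\<forall>a b c. Assoc C a b c \<in> hom C (Tens C (Tens C a b) c) (Tens C a (Tens C b c))
              \<and> iso C (Assoc C a b c)) \<and>
     (\<forall>f g h. Comp C (Assoc C (Cod C f) (Cod C g) (Cod C h)) (TensM C (TensM C f g) h)
            = Comp C (TensM C f (TensM C g h)) (Assoc C (Dom C f) (Dom C g) (Dom C h))) \<and>
     \<comment> \<open>left unitor \<open>1\<otimes>a \<rightarrow> a\<close>\<close>
     (\<forall>a. Lunit C a \<in> hom C (Tens C (Unit C) a) a \<and> iso C (Lunit C a)) \<and>
     (\<forall>f. Comp C (Lunit C (Cod C f)) (TensM C (Id C (Unit C)) f) = Comp C f (Lunit C (Dom C f))) \<and>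
     \<comment> \<open>right unitor \<open>a\<otimes>1 \<rightarrow> a\<close>\<close>
     (\<forall>a. Runit C a \<in> hom C (Tens C a (Unit C)) a \<and> iso C (Runit C a)) \<and>
     (\<forall>f. Comp C (Runit C (Cod C f)) (TensM C f (Id C (Unit C))) = Comp C f (Runit C (Dom C f))) \<and>
     \<comment> \<open>pentagon\<close>
     (\<forall>a b c d.
        Comp C (Assoc C a b (Tens C c d)) (Assoc C (Tens C a b) c d)
        = Comp C (TensM C (Id C a) (Assoc C b c d))
            (Comp C (Assoc C a (Tens C b c) d) (TensM C (Assoc C a b c) (Id C d)))) \<and>
     \<comment> \<open>triangle\<close>
     (\<forall>a b. Comp C (TensM C (Id C a) (Lunit C b)) (Assoc C a (Unit C) b)
            = TensM C (Runit C a) (Id C b))"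

definition weak_2group :: "('o, 'm, 'z) moncat_scheme \<Rightarrow> bool" where
  "weak_2group C \<longleftrightarrow> monoidal_category C \<and> (\<forall>f. iso C f) \<and>
     (\<forall>x. \<exists>y. isomorphic C (Tens C x y) (Unit C) \<and> isomorphic C (Tens C y x) (Unit C))"

end

theory Submission
  imports Defs
begin

locale w2 =
  fixes C :: "('o,'m) moncat"
  assumes W: "weak_2group C"
begin

abbreviation "cp \<equiv> Comp C"
abbreviation "tm \<equiv> TensM C"
abbreviation "T \<equiv> Tens C"
abbreviation "ID \<equiv> Id C"
abbreviation "u \<equiv> Unit C"
abbreviation "al \<equiv> Assoc C"
abbreviation "lu \<equiv> Lunit C"
abbreviation "ru \<equiv> Runit C"
abbreviation "iv \<equiv> Inv C"
abbreviation "dm \<equiv> Dom C"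
abbreviation "cd \<equiv> Cod C"

lemma MC: "monoidal_category C" using W unfolding weak_2group_def by simp
lemma CAT: "category C" using MC unfolding monoidal_category_def by simp
lemma TF: "tensor_functor C" using MC unfolding monoidal_category_def by simp

lemma dom_id[simp]: "dm (ID a) = a" and cod_id[simp]: "cd (ID a) = a"
  using CAT unfolding category_def by auto
lemma dom_comp[simp]: "cd f = dm g \<Longrightarrow> dm (cp g f) = dm f"
  and cod_comp[simp]: "cd f = dm g \<Longrightarrow> cd (cp g f) = cd g"
  using CAT unfolding category_def by auto
lemma comp_id_r[simp]: "dm f = a \<Longrightarrow> cp f (ID a) = f"
  and comp_id_l[simp]: "cd f = a \<Longrightarrow> cp (ID a) f = f"
  using CAT unfolding category_def by auto
lemma assoc[simp]: "cd f = dm g \<Longrightarrow> cd g = dm h \<Longrightarrow> cp (cp h g) f = cp h (cp g f)"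
proof -
  assume a: "cd f = dm g" "cd g = dm h"
  have "\<forall>f g h. cd f = dm g \<longrightarrow> cd g = dm h \<longrightarrow> cp h (cp g f) = cp (cp h g) f"
    using CAT unfolding category_def by blast
  then show ?thesis using a by simp
qed

lemma dom_tm[simp]: "dm (tm f g) = T (dm f) (dm g)" and cod_tm[simp]: "cd (tm f g) = T (cd f) (cd g)"
  using TF unfolding tensor_functor_def by auto
lemma tm_id[simp]: "tm (ID a) (ID b) = ID (T a b)"
  using TF unfolding tensor_functor_def by auto
lemma interchange: "cd f = dm f' \<Longrightarrow> cd g = dm g' \<Longrightarrow> tm (cp f' f) (cp g' g) = cp (tm f' g') (tm f g)"
  using TF unfolding tensor_functor_def by auto

lemma iso_all: "iso C f" using W unfolding weak_2group_def by simp
lemma is_inv: "is_inverse C f (iv f)"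
  using iso_all[of f] unfolding iso_def Inv_def by (metis someI)
lemma dom_inv[simp]: "dm (iv f) = cd f" and cod_inv[simp]: "cd (iv f) = dm f"
  and inv_l[simp]: "cp (iv f) f = ID (dm f)" and inv_r[simp]: "cp f (iv f) = ID (cd f)"
  using is_inv[of f] unfolding is_inverse_def by auto
lemma inv_l2[simp]: "cd g = dm f \<Longrightarrow> cp (iv f) (cp f g) = g"
  by (simp flip: assoc)
lemma inv_r2[simp]: "cd g = cd f \<Longrightarrow> cp f (cp (iv f) g) = g"
  by (simp flip: assoc)

lemma al_hom[simp]: "dm (al a b c) = T (T a b) c" "cd (al a b c) = T a (T b c)"
  using MC unfolding monoidal_category_def hom_def by auto
lemma lu_hom[simp]: "dm (lu a) = T u a" "cd (lu a) = a"
  using MC unfolding monoidal_category_def hom_def by auto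
lemma ru_hom[simp]: "dm (ru a) = T a u" "cd (ru a) = a"
  using MC unfolding monoidal_category_def hom_def by auto
lemma al_nat: "cp (al (cd f) (cd g) (cd h)) (tm (tm f g) h) = cp (tm f (tm g h)) (al (dm f) (dm g) (dm h))"
  using MC unfolding monoidal_category_def by auto
lemma lu_nat: "cp (lu (cd f)) (tm (ID u) f) = cp f (lu (dm f))"
  using MC unfolding monoidal_category_def by auto
lemma ru_nat: "cp (ru (cd f)) (tm f (ID u)) = cp f (ru (dm f))"
  using MC unfolding monoidal_category_def by auto
lemma pentagon: "cp (al a b (T c d)) (al (T a b) c d)
        = cp (tm (ID a) (al b c d)) (cp (al a (T b c) d) (tm (al a b c) (ID d)))"
  using MC unfolding monoidal_category_def by auto
lemma triangle: "cp (tm (ID a) (lu b)) (al a u b) = tm (ru a) (ID b)"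
  using MC unfolding monoidal_category_def by auto

lemma lcancel: "cp f g = cp f h \<Longrightarrow> cd g = dm f \<Longrightarrow> cd h = dm f \<Longrightarrow> g = h"
proof -
  assume "cp f g = cp f h" "cd g = dm f" "cd h = dm f"
  then have "cp (iv f) (cp f g) = cp (iv f) (cp f h)" by simp
  then show ?thesis using \<open>cd g = dm f\<close> \<open>cd h = dm f\<close> by simp
qed
lemma rcancel: "cp g f = cp h f \<Longrightarrow> dm g = cd f \<Longrightarrow> dm h = cd f \<Longrightarrow> g = h"
proof -
  assume "cp g f = cp h f" "dm g = cd f" "dm h = cd f"
  then have "cp (cp g f) (iv f) = cp (cp h f) (iv f)" by simp
  then show ?thesis using \<open>dm g = cd f\<close> \<open>dm h = cd f\<close> by simp
qed

lemma tm_id_comp_r: "cd f = dm g \<Longrightarrow> tm (ID a) (cp g f) = cp (tm (ID a) g) (tm (ID a) f)"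
  using interchange[of "ID a" "ID a" f g] by simp
lemma tm_id_comp_l: "cd f = dm g \<Longrightarrow> tm (cp g f) (ID a) = cp (tm g (ID a)) (tm f (ID a))"
  using interchange[of f g "ID a" "ID a"] by simp

lemma faith_l: "tm (ID u) f = tm (ID u) g \<Longrightarrow> dm f = dm g \<Longrightarrow> cd f = cd g \<Longrightarrow> f = g"
proof -
  assume a: "tm (ID u) f = tm (ID u) g" "dm f = dm g" "cd f = cd g"
  have "cp f (lu (dm f)) = cp g (lu (dm f))" using lu_nat[of f] lu_nat[of g] a by simp
  then show ?thesis by (rule rcancel) (simp_all add: a)
qed
lemma faith_r: "tm f (ID u) = tm g (ID u) \<Longrightarrow> dm f = dm g \<Longrightarrow> cd f = cd g \<Longrightarrow> f = g"
proof -
  assume a: "tm f (ID u) = tm g (ID u)" "dm f = dm g" "cd f = cd g"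
  have "cp f (ru (dm f)) = cp g (ru (dm f))" using ru_nat[of f] ru_nat[of g] a by simp
  then show ?thesis by (rule rcancel) (simp_all add: a)
qed

lemma kelly_a: "cp (lu (T a b)) (al u a b) = tm (lu a) (ID b)"
proof -
  define K where "K = cp (al u (T u a) b) (tm (al u u a) (ID b))"
  have s1: "cp (tm (ID u) (cp (lu (T a b)) (al u a b))) K = cp (tm (ru u) (ID (T a b))) (al (T u u) a b)"
  proof -
    have "cp (tm (ID u) (cp (lu (T a b)) (al u a b))) K
       = cp (tm (ID u) (lu (T a b))) (cp (tm (ID u) (al u a b)) (cp (al u (T u a) b) (tm (al u u a) (ID b))))"
      unfolding K_def by (simp add: tm_id_comp_r)
    also have "\<dots> = cp (tm (ID u) (lu (T a b))) (cp (al u u (T a b)) (al (T u u) a b))"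
      by (simp add: pentagon)
    also have "\<dots> = cp (cp (tm (ID u) (lu (T a b))) (al u u (T a b))) (al (T u u) a b)"
      by simp
    also have "\<dots> = cp (tm (ru u) (ID (T a b))) (al (T u u) a b)"
      by (simp only: triangle)
    finally show ?thesis .
  qed
  have s2: "cp (tm (ru u) (ID (T a b))) (al (T u u) a b) = cp (al u a b) (tm (tm (ru u) (ID a)) (ID b))"
    using al_nat[of "ru u" "ID a" "ID b"] by simp
  have s3: "cp (tm (ID u) (tm (lu a) (ID b))) K = cp (al u a b) (tm (tm (ru u) (ID a)) (ID b))"
  proof -
    have "cp (tm (ID u) (tm (lu a) (ID b))) K = cp (cp (tm (ID u) (tm (lu a) (ID b))) (al u (T u a) b)) (tm (al u u a) (ID b))"
      unfolding K_def by simp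
    also have "\<dots> = cp (cp (al u a b) (tm (tm (ID u) (lu a)) (ID b))) (tm (al u u a) (ID b))"
      using al_nat[of "ID u" "lu a" "ID b"] by simp
    also have "\<dots> = cp (al u a b) (tm (cp (tm (ID u) (lu a)) (al u u a)) (ID b))"
      by (simp add: tm_id_comp_l)
    also have "\<dots> = cp (al u a b) (tm (tm (ru u) (ID a)) (ID b))"
      by (simp only: triangle)
    finally show ?thesis .
  qed
  have "cp (tm (ID u) (cp (lu (T a b)) (al u a b))) K = cp (tm (ID u) (tm (lu a) (ID b))) K"
    using s1 s2 s3 by simp
  then have "tm (ID u) (cp (lu (T a b)) (al u a b)) = tm (ID u) (tm (lu a) (ID b))"
    by (rule rcancel) (simp_all add: K_def)
  then show ?thesis by (rule faith_l) simp_all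
qed

lemma lu_unit: "tm (ID u) (lu u) = lu (T u u)"
proof -
  have "cp (lu u) (tm (ID u) (lu u)) = cp (lu u) (lu (T u u))"
    using lu_nat[of "lu u"] by simp
  then show ?thesis by (rule lcancel) simp_all
qed

lemma lu_ru: "lu u = ru u"
proof -
  have "tm (lu u) (ID u) = tm (ru u) (ID u)"
    using kelly_a[of u u] triangle[of u u] lu_unit by simp
  then show ?thesis by (rule faith_r) simp_all
qed

lemma step1:
  assumes di: "dm i = u" and ci: "cd i = X" and cw: "cd W = T X X"
  shows "cp (lu X) (cp (tm (iv i) (ID X)) W) = cp (ru X) (cp (tm (ID X) (iv i)) W)"
proof -
  have "cp (cp (lu X) (tm (iv i) (ID X))) (tm i i) = cp (lu X) (tm (cp (iv i) i) (cp (ID X) i))"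
    using interchange[of i "iv i" i "ID X"] di ci by simp
  also have "\<dots> = cp i (lu u)" using lu_nat[of i] di ci by simp
  finally have L: "cp (cp (lu X) (tm (iv i) (ID X))) (tm i i) = cp i (lu u)" .
  have "cp (cp (ru X) (tm (ID X) (iv i))) (tm i i) = cp (ru X) (tm (cp (ID X) i) (cp (iv i) i))"
    using interchange[of i "ID X" i "iv i"] di ci by simp
  also have "\<dots> = cp i (ru u)" using ru_nat[of i] di ci by simp
  finally have R: "cp (cp (ru X) (tm (ID X) (iv i))) (tm i i) = cp i (ru u)" .
  have "cp (lu X) (tm (iv i) (ID X)) = cp (ru X) (tm (ID X) (iv i))"
    by (rule rcancel[where f="tm i i"]) (use L R lu_ru di ci in simp_all)
  then have "cp (cp (lu X) (tm (iv i) (ID X))) W = cp (cp (ru X) (tm (ID X) (iv i))) W" by simp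
  then show ?thesis using cw ci di by simp
qed

lemma tri_inv: "cp (al x u y) (tm (iv (ru x)) (ID y)) = tm (ID x) (iv (lu y))"
proof (rule lcancel[where f="tm (ID x) (lu y)"])
  have "cp (tm (ID x) (lu y)) (cp (al x u y) (tm (iv (ru x)) (ID y)))
      = cp (tm (ru x) (ID y)) (tm (iv (ru x)) (ID y))"
    using triangle[of x y] by (simp flip: assoc)
  also have "\<dots> = ID (T x y)" by (simp flip: tm_id_comp_l)
  also have "\<dots> = cp (tm (ID x) (lu y)) (tm (ID x) (iv (lu y)))" by (simp flip: tm_id_comp_r)
  finally show "cp (tm (ID x) (lu y)) (cp (al x u y) (tm (iv (ru x)) (ID y)))
      = cp (tm (ID x) (lu y)) (tm (ID x) (iv (lu y)))" .
qed simp_all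

lemma btail:
  assumes dE: "dm E = u" and cE: "cd E = Z" and cg: "cd g = T x y"
  shows "cp (tm (tm (ID x) E) (ID y)) (cp (tm (iv (ru x)) (ID y)) g)
       = cp (iv (al x Z y)) (cp (tm (ID x) (tm E (ID y))) (cp (tm (ID x) (iv (lu y))) g))"
proof (rule lcancel[where f="al x Z y"])
  have "cp (al x Z y) (cp (tm (tm (ID x) E) (ID y)) (cp (tm (iv (ru x)) (ID y)) g))
      = cp (cp (al x Z y) (tm (tm (ID x) E) (ID y))) (cp (tm (iv (ru x)) (ID y)) g)"
    using dE cE cg by simp
  also have "\<dots> = cp (cp (tm (ID x) (tm E (ID y))) (al x u y)) (cp (tm (iv (ru x)) (ID y)) g)"
    using al_nat[of "ID x" E "ID y"] dE cE by simp
  also have "\<dots> = cp (tm (ID x) (tm E (ID y))) (cp (cp (al x u y) (tm (iv (ru x)) (ID y))) g)"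
    using dE cE cg by simp
  also have "\<dots> = cp (tm (ID x) (tm E (ID y))) (cp (tm (ID x) (iv (lu y))) g)"
    by (simp only: tri_inv)
  also have "\<dots> = cp (al x Z y) (cp (iv (al x Z y)) (cp (tm (ID x) (tm E (ID y))) (cp (tm (ID x) (iv (lu y))) g)))"
    using dE cE cg by simp
  finally show "cp (al x Z y) (cp (tm (tm (ID x) E) (ID y)) (cp (tm (iv (ru x)) (ID y)) g))
      = cp (al x Z y) (cp (iv (al x Z y)) (cp (tm (ID x) (tm E (ID y))) (cp (tm (ID x) (iv (lu y))) g)))" .
qed (use dE cE cg in simp_all)

lemma bmid:
  assumes cg: "cd g = T x (T (T y x) y)"
  shows "cp (al (T x y) x y) (cp (tm (iv (al x y x)) (ID y)) (cp (iv (al x (T y x) y)) g))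
       = cp (iv (al x y (T x y))) (cp (tm (ID x) (al y x y)) g)"
proof (rule lcancel[where f="al x y (T x y)"])
  have "cp (al x y (T x y)) (cp (al (T x y) x y) (cp (tm (iv (al x y x)) (ID y)) (cp (iv (al x (T y x) y)) g)))
     = cp (cp (al x y (T x y)) (al (T x y) x y)) (cp (tm (iv (al x y x)) (ID y)) (cp (iv (al x (T y x) y)) g))"
    using cg by simp
  also have "\<dots> = cp (tm (ID x) (al y x y)) (cp (al x (T y x) y) (cp (cp (tm (al x y x) (ID y)) (tm (iv (al x y x)) (ID y))) (cp (iv (al x (T y x) y)) g)))"
    using cg by (simp only: pentagon) simp
  also have "\<dots> = cp (tm (ID x) (al y x y)) g"
    using cg by (simp flip: tm_id_comp_l)
  finally show "cp (al x y (T x y)) (cp (al (T x y) x y) (cp (tm (iv (al x y x)) (ID y)) (cp (iv (al x (T y x) y)) g)))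
     = cp (al x y (T x y)) (cp (iv (al x y (T x y))) (cp (tm (ID x) (al y x y)) g))"
    using cg by simp
qed (use cg in simp_all)

lemma main:
  assumes di: "dm i = u" and ci: "cd i = T x xb" and de: "dm e = T xb x" and ce: "cd e = u"
  shows "cp (lu (T x xb)) (cp (tm (iv i) (ID (T x xb))) (cp (iv (al x xb (T x xb)))
         (cp (tm (ID x) (al xb x xb)) (cp (tm (ID x) (tm (iv e) (ID xb))) (cp (tm (ID x) (iv (lu xb))) i)))))
     = cp (ru (T x xb)) (cp (tm (ID (T x xb)) (iv i)) (cp (al (T x xb) x xb)
         (cp (tm (iv (al x xb x)) (ID xb)) (cp (tm (tm (ID x) (iv e)) (ID xb)) (cp (tm (iv (ru x)) (ID xb)) i)))))"
proof -
  let ?R = "cp (tm (ID x) (tm (iv e) (ID xb))) (cp (tm (ID x) (iv (lu xb))) i)"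
  have 1: "cp (tm (tm (ID x) (iv e)) (ID xb)) (cp (tm (iv (ru x)) (ID xb)) i)
       = cp (iv (al x (T xb x) xb)) ?R"
    by (rule btail) (use di ci de ce in simp_all)
  have 2: "cp (al (T x xb) x xb) (cp (tm (iv (al x xb x)) (ID xb)) (cp (iv (al x (T xb x) xb)) ?R))
       = cp (iv (al x xb (T x xb))) (cp (tm (ID x) (al xb x xb)) ?R)"
    by (rule bmid) (use di ci de ce in simp)
  show ?thesis
    unfolding 1 2
    by (rule step1) (use di ci de ce in simp_all)
qed

end

theorem lemma5p2:
  fixes C :: "('o, 'm) moncat" and x xb :: 'o and i e :: 'm
  assumes "weak_2group C"
    and "i \<in> hom C (Unit C) (Tens C x xb)" and "iso C i"
    and "e \<in> hom C (Tens C xb x) (Unit C)" and "iso C e"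
  shows
    "let T = Tens C; M = TensM C; c = Comp C; I = Id C; iv = Inv C;
         a = Assoc C; l = Lunit C; r = Runit C
     in
       c (l (T x xb)) (c (M (iv i) (I (T x xb))) (c (iv (a x xb (T x xb)))
         (c (M (I x) (a xb x xb)) (c (M (I x) (M (iv e) (I xb))) (c (M (I x) (iv (l xb))) i)))))
     = c (r (T x xb)) (c (M (I (T x xb)) (iv i)) (c (a (T x xb) x xb)
         (c (M (iv (a x xb x)) (I xb)) (c (M (M (I x) (iv e)) (I xb)) (c (M (iv (r x)) (I xb)) i)))))"
proof -
  interpret w2 C by (rule w2.intro) (rule assms(1))
  show ?thesis
    unfolding Let_def
    by (rule main) (use assms(2,4) in \<open>simp_all add: hom_def\<close>)
qed

end
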